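(* Let $D$ be a squarefree integer, not a perfect square, with $D\equiv 1\pmod 8$, and let $D=\pm\prod_{i=1}^r p_i$ with distinct primes $p_1<\cdots<p_r$. Define \[ c_{\mathrm{loc}}:=4\prod_{i=1}^r\sum_{l=1}^{\infty}\frac{|\mathcal{R}_l^*(p_i)|}{p_i^{2(8l+1)}}. \] Then $c_{\mathrm{loc}}\geq \dfrac{4}{D^2}$.
   Context: $Q_1(\mathbf{t})=t_2^2-Dt_3^2-t_0t_1$, $Q_2(\mathbf{t})=t_2^2-Dt_4^2-(t_0+At_1)(t_0+Bt_1)$, $G(A,B)=A^2-2AB+B^2-2A-2B+1$. For a prime $p$ and $l\geq 1$, $\mathcal{R}_l(p)$ is the set of pairs of residue classes $(A,B)$ modulo $p^{8l+1}$ such that $p^{l+1}$ divides none of $A,B,A-B,G(A,B)$ and $Q_1(\mathbf{t})\equiv Q_2(\mathbf{t})\equiv 0\pmod{p^{8l+1}}$ has a solution $\mathbf{t}\in(\mathbb{Z}/p^{8l+1}\mathbb{Z})^5$ with components not all divisible by $p$. Set $\mathcal{R}_0(p)=\emptyset$, and for $l\geq 1$ let $\mathcal{R}_l^*(p)\subset\mathcal{R}_l(p)$ be the set of $(A,B)\in\mathcal{R}_l(p)$ whose reduction modulo $p^{8(l-1)+1}$ is not in $\mathcal{R}_{l-1}(p)$. *)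

theory Defs
  imports "HOL-Analysis.Analysis" "HOL-Computational_Algebra.Squarefree"
begin

definition Q1 :: "int \<Rightarrow> int \<Rightarrow> int \<Rightarrow> int \<Rightarrow> int \<Rightarrow> int \<Rightarrow> int" where
  "Q1 D t0 t1 t2 t3 t4 = t2^2 - D * t3^2 - t0 * t1"

definition Q2 :: "int \<Rightarrow> int \<Rightarrow> int \<Rightarrow> int \<Rightarrow> int \<Rightarrow> int \<Rightarrow> int \<Rightarrow> int \<Rightarrow> int" where
  "Q2 D A B t0 t1 t2 t3 t4 = t2^2 - D * t4^2 - (t0 + A * t1) * (t0 + B * t1)"

definition G :: "int \<Rightarrow> int \<Rightarrow> int" where
  "G A B = A^2 - 2*A*B + B^2 - 2*A - 2*B + 1"

text \<open>R D p l: pairs of residue classes (A,B) mod p^(8l+1), represented by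
  representatives in {0..<p^(8l+1)}; empty for l = 0.\<close>
definition R :: "int \<Rightarrow> int \<Rightarrow> nat \<Rightarrow> (int \<times> int) set" where
  "R D p l = (if l = 0 then {} else
     (let N = p ^ (8*l+1) in
      {(A, B). A \<in> {0..<N} \<and> B \<in> {0..<N} \<and>
        \<not> p^(l+1) dvd A \<and> \<not> p^(l+1) dvd B \<and> \<not> p^(l+1) dvd (A - B) \<and>
        \<not> p^(l+1) dvd G A B \<and>
        (\<exists>t0\<in>{0..<N}. \<exists>t1\<in>{0..<N}. \<exists>t2\<in>{0..<N}. \<exists>t3\<in>{0..<N}. \<exists>t4\<in>{0..<N}.
           \<not> (p dvd t0 \<and> p dvd t1 \<and> p dvd t2 \<and> p dvd t3 \<and> p dvd t4) \<and>
           N dvd Q1 D t0 t1 t2 t3 t4 \<and> N dvd Q2 D A B t0 t1 t2 t3 t4)}))"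

definition Rstar :: "int \<Rightarrow> int \<Rightarrow> nat \<Rightarrow> (int \<times> int) set" where
  "Rstar D p l = {(A, B). (A, B) \<in> R D p l \<and>
      (A mod p ^ (8*(l-1)+1), B mod p ^ (8*(l-1)+1)) \<notin> R D p (l - 1)}"

definition c_loc :: "int \<Rightarrow> ennreal" where
  "c_loc D = 4 * (\<Prod>p\<in>{p::nat. prime p \<and> int p dvd D}.
      (\<Sum>l. ennreal (real (card (Rstar D (int p) (Suc l))) / real p ^ (2*(8*(Suc l)+1)))))"

end

theory Submission
  imports Defs "HOL-Number_Theory.Number_Theory"
begin



lemma hensel_sqrt:
  fixes p K y :: int
  assumes p: "prime p" "odd p" and y: "\<not> p dvd y" and K: "[K = y^2] (mod p)"
  shows "\<exists>t. [t^2 = K] (mod p^(Suc k)) \<and> [t = y] (mod p)"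
proof (induction k)
  case 0
  then show ?case using K by (auto intro: cong_sym)
next
  case (Suc k)
  then obtain t where t1: "[t^2 = K] (mod p^(Suc k))" and t2: "[t = y] (mod p)" by blast
  obtain m where m: "K - t^2 = p^(Suc k) * m" using t1 by (metis cong_iff_dvd_diff cong_sym dvdE)
  have "\<not> p dvd t" using t2 y by (metis cong_dvd_iff)
  moreover have "\<not> p dvd 2"
  proof
    assume "p dvd 2"
    hence "p \<le> 2" by (simp add: zdvd_imp_le)
    moreover have "p \<ge> 2" using p prime_ge_2_int by blast
    ultimately have "p = 2" by simp
    thus False using p by simp
  qed
  ultimately have "\<not> p dvd 2*t" using p by (simp add: prime_dvd_mult_iff)
  hence "coprime (2*t) p" using p by (metis coprime_commute prime_imp_coprime)
  then obtain z where z: "[2*t*z = 1] (mod p)" using cong_solve_coprime_int by blast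
  obtain w where w: "1 - 2*t*z = p*w" using z by (metis cong_iff_dvd_diff cong_sym dvdE)
  define t' where "t' = t + p^(Suc k)*m*z"
  have "K - t'^2 = p^(Suc k)*m*(1 - 2*t*z) - p^(Suc k)*p^(Suc k)*m^2*z^2"
    unfolding t'_def using m by (simp add: algebra_simps power2_eq_square)
  also have "\<dots> = p^(Suc (Suc k)) * (m*w - p^k*m^2*z^2)"
    unfolding w by (simp add: algebra_simps)
  finally have "[t'^2 = K] (mod p^(Suc (Suc k)))"
    by (metis cong_iff_dvd_diff cong_sym dvdI)
  moreover have "[t' = y] (mod p)"
  proof -
    have "[t' = t] (mod p)" unfolding t'_def cong_iff_dvd_diff by simp
    thus ?thesis using t2 by (rule cong_trans)
  qed
  ultimately show ?case by blast
qed



lemma small_dvd_zero: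
  fixes p z :: int
  assumes "p dvd z" "\<bar>z\<bar> < p" shows "z = 0"
proof (rule ccontr)
  assume "z \<noteq> 0"
  hence "p dvd \<bar>z\<bar>" "0 < \<bar>z\<bar>" using assms by auto
  hence "p \<le> \<bar>z\<bar>" by (rule zdvd_imp_le)
  with assms show False by simp
qed

lemma sq_inj_mod:
  fixes p d x1 x2 :: int
  assumes p: "prime p" and d: "\<not> p dvd d"
    and x1: "0 \<le> x1" "2*x1 < p" and x2: "0 \<le> x2" "2*x2 < p"
    and c: "p dvd (d*x1^2 - d*x2^2)"
  shows "x1 = x2"
proof -
  have "d*x1^2 - d*x2^2 = d*((x1-x2)*(x1+x2))" by (simp add: algebra_simps power2_eq_square)
  with c d p have "p dvd (x1-x2)*(x1+x2)" by (simp add: prime_dvd_mult_iff)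
  with p have "p dvd (x1 - x2) \<or> p dvd (x1+x2)" by (simp add: prime_dvd_mult_iff)
  thus ?thesis
  proof
    assume "p dvd (x1 - x2)"
    moreover have "\<bar>x1 - x2\<bar> < p" using x1 x2 by auto
    ultimately have "x1 - x2 = 0" by (rule small_dvd_zero)
    thus ?thesis by simp
  next
    assume "p dvd (x1 + x2)"
    moreover have "\<bar>x1 + x2\<bar> < p" using x1 x2 by auto
    ultimately have "x1 + x2 = 0" by (rule small_dvd_zero)
    thus ?thesis using x1 x2 by auto
  qed
qed

lemma two_squares:
  fixes p a d :: int
  assumes p: "prime p" "odd p" and a: "\<not> p dvd a" and d: "\<not> p dvd d"
  shows "\<exists>x y. \<not> p dvd y \<and> [d*(x^2+y^2) = a] (mod p)"
proof -
  define h where "h = (p - 1) div 2"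
  have p2: "p \<ge> 2" using prime_ge_2_int[OF p(1)] .
  have hp: "2*h + 1 = p" unfolding h_def using p(2) by (auto elim!: oddE)
  define S where "S = {0..h}"
  define f where "f = (\<lambda>x. (d*x^2) mod p)"
  define g where "g = (\<lambda>y. (a - d*y^2) mod p)"
  have "\<exists>x\<in>S. \<exists>y\<in>S. f x = g y"
  proof (rule ccontr)
    assume nx: "\<not> ?thesis"
    have fin: "finite (f ` S)" "finite (g ` S)" unfolding S_def by auto
    have disj: "f ` S \<inter> g ` S = {}" using nx by auto
    have injf: "inj_on f S"
    proof
      fix x1 x2 assume A: "x1 \<in> S" "x2 \<in> S" "f x1 = f x2"
      hence "p dvd d*x1^2 - d*x2^2" unfolding f_def by (simp add: mod_eq_dvd_iff)
      moreover have "0 \<le> x1" "2*x1 < p" "0 \<le> x2" "2*x2 < p" using A(1,2) hp unfolding S_def by auto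
      ultimately show "x1 = x2" using sq_inj_mod[OF p(1) d] by blast
    qed
    have injg: "inj_on g S"
    proof
      fix x1 x2 assume "x1 \<in> S" "x2 \<in> S" "g x1 = g x2"
      hence "p dvd (a - d*x1^2) - (a - d*x2^2)" unfolding g_def by (simp add: mod_eq_dvd_iff)
      hence "p dvd d*x2^2 - d*x1^2" by (simp add: algebra_simps)
      moreover have "0 \<le> x1" "2*x1 < p" "0 \<le> x2" "2*x2 < p" using \<open>x1 \<in> S\<close> \<open>x2 \<in> S\<close> hp unfolding S_def by auto
      ultimately show "x1 = x2" using sq_inj_mod[OF p(1) d, of x2 x1] by simp
    qed
    have sub: "f ` S \<union> g ` S \<subseteq> {0..<p}" unfolding f_def g_def using p2 by (auto simp del: atLeastLessThan_iff) (simp_all add: atLeastLessThan_iff)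
    have cS: "card S = nat (h+1)" unfolding S_def by simp
    have "card (f ` S \<union> g ` S) = card (f ` S) + card (g ` S)"
      using fin disj by (simp add: card_Un_disjoint)
    also have "\<dots> = 2 * nat (h+1)" using injf injg cS by (simp add: card_image)
    finally have "card (f ` S \<union> g ` S) = nat (p + 1)" using hp by simp
    moreover have "card (f ` S \<union> g ` S) \<le> card {0..<p}" using sub by (intro card_mono) auto
    ultimately show False using p2 by simp
  qed
  then obtain x y where xy: "x \<in> S" "y \<in> S" "f x = g y" by blast
  hence c: "p dvd d*(x^2+y^2) - a" unfolding f_def g_def
    by (simp add: mod_eq_dvd_iff algebra_simps)
  show ?thesis
  proof (cases "p dvd y")
    case False
    thus ?thesis using c unfolding cong_iff_dvd_diff by blast
  next
    case True
    have "0 \<le> y" "2*y < p" using xy(2) hp unfolding S_def by auto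
    hence "\<bar>y\<bar> < p" by simp
    with True have "y = 0" by (rule small_dvd_zero)
    hence c2: "p dvd d*(0^2+x^2) - a" using c by simp
    have "\<not> p dvd x"
    proof
      assume "p dvd x"
      hence "p dvd d*(0^2+x^2)" by (simp add: power2_eq_square)
      from dvd_diff[OF this c2] have "p dvd a" by simp
      with a show False by simp
    qed
    thus ?thesis using c2 unfolding cong_iff_dvd_diff by blast
  qed
qed



lemma Q1_mod: "[Q1 D (t0 mod N) (t1 mod N) (t2 mod N) (t3 mod N) (t4 mod N) = Q1 D t0 t1 t2 t3 t4] (mod N)"
proof -
  have h: "\<And>t::int. [t mod N = t] (mod N)" by (simp add: cong_def)
  show ?thesis unfolding Q1_def by (intro cong_diff cong_mult cong_pow cong_add cong_refl h)
qed

lemma Q2_mod: "[Q2 D A B (t0 mod N) (t1 mod N) (t2 mod N) (t3 mod N) (t4 mod N) = Q2 D A B t0 t1 t2 t3 t4] (mod N)"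
proof -
  have h: "\<And>t::int. [t mod N = t] (mod N)" by (simp add: cong_def)
  show ?thesis unfolding Q2_def by (intro cong_diff cong_mult cong_pow cong_add cong_refl h)
qed

lemma test: fixes p e f g d' d y :: int assumes "a - d*x^2 = d*y^2 - p*e" "B - D*x^2 = -1 + p*f" "d*d' = 1 + p*g"
  shows "- d'*(a - d*x^2)*(B - D*x^2) - y^2 = p*(y^2*(g - f - p*g*f) - d'*e*(1-p*f))"
proof -
  have "- d'*(a - d*x^2)*(B - D*x^2) - y^2 = (d*d')*y^2*(1-p*f) - p*d'*e*(1-p*f) - y^2"
    unfolding assms(1,2) by (simp add: algebra_simps)
  also have "\<dots> = p*(y^2*(g - f - p*g*f) - d'*e*(1-p*f))" unfolding assms(3) by (simp add: algebra_simps)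
  finally show ?thesis .
qed


lemma in_R1:
  fixes p D A B :: int
  assumes p: "prime p" "odd p" and pD: "p dvd D" "\<not> p^2 dvd D"
    and A: "0 \<le> A" "A < p^9" "p dvd A" "\<not> p^2 dvd A"
    and B: "0 \<le> B" "B < p^9" "p dvd B + 1"
  shows "(A,B) \<in> R D p 1"
proof -
  have p2: "p \<ge> 2" using prime_ge_2_int[OF p(1)] .
  have p_not2: "\<not> p dvd 2"
  proof
    assume "p dvd 2"
    hence "p \<le> 2" by (simp add: zdvd_imp_le)
    hence "p = 2" using p2 by simp
    thus False using p by simp
  qed
  obtain a where a: "A = p*a" using A(3) by blast
  obtain d where d: "D = p*d" using pD(1) by blast
  have na: "\<not> p dvd a"
  proof
    assume "p dvd a" then obtain k where "a = p*k" by blast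
    hence "A = p^2*k" using a by (simp add: power2_eq_square)
    thus False using A(4) by simp
  qed
  have nd: "\<not> p dvd d"
  proof
    assume "p dvd d" then obtain k where "d = p*k" by blast
    hence "D = p^2*k" using d by (simp add: power2_eq_square)
    thus False using pD(2) by simp
  qed
  obtain x y where xy: "\<not> p dvd y" "[d*(x^2+y^2) = a] (mod p)"
    using two_squares[OF p na nd] by blast
  obtain e where e: "d*(x^2+y^2) - a = p*e" using xy(2) unfolding cong_iff_dvd_diff by blast
  have cop: "coprime d (p^8)" using nd p by (metis coprime_commute coprime_power_right_iff prime_imp_coprime)
  obtain d' where d': "[d*d' = 1] (mod p^8)" using cong_solve_coprime_int[OF cop] by blast
  obtain g' where g': "d*d' - 1 = p^8*g'" using d' unfolding cong_iff_dvd_diff by blast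
  obtain f0 where f0: "B + 1 = p*f0" using B(3) by blast
  define K where "K = - d'*(a - d*x^2)*(B - D*x^2)"
  have "K - y^2 = p*(y^2*(p^7*g' - (f0 - d*x^2) - p*(p^7*g')*(f0 - d*x^2)) - d'*e*(1-p*(f0 - d*x^2)))"
    unfolding K_def
  proof (rule test)
    show "a - d * x\<^sup>2 = d * y\<^sup>2 - p * e" using e by (simp add: algebra_simps)
    show "B - D * x\<^sup>2 = - 1 + p * (f0 - d * x\<^sup>2)" using f0 d by (simp add: algebra_simps)
    have p87: "p^8 = p*p^7" using power_Suc[of p 7] by simp
    show "d * d' = 1 + p * (p ^ 7 * g')" using g' unfolding p87 by (simp add: algebra_simps)
  qed
  hence "[K = y^2] (mod p)" unfolding cong_iff_dvd_diff by (metis dvdI)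
  from hensel_sqrt[OF p xy(1) this, of 7] obtain t4 where t4: "[t4^2 = K] (mod p^8)"
    by (auto simp: numeral_eq_Suc)
  obtain h where h: "t4^2 - K = p^8*h" using t4 unfolding cong_iff_dvd_diff by blast
  define N where "N = p^9"
  have N1: "N > 1" unfolding N_def using p2 by (intro one_less_power) auto
  have q1: "Q1 D (-D*x^2) 1 0 x t4 = 0" unfolding Q1_def by (simp add: power2_eq_square)
  have "Q2 D A B (-D*x^2) 1 0 x t4 = - p * (d*t4^2 + (a - d*x^2)*(B - D*x^2))"
    unfolding Q2_def a d by (simp add: algebra_simps power2_eq_square)
  also have "d*t4^2 + (a - d*x^2)*(B - D*x^2) = p^8*(d*h - g'*(a - d*x^2)*(B - D*x^2))"
  proof -
    have "d*t4^2 = d*K + p^8*(d*h)" using h by (simp add: algebra_simps)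
    also have "d*K = - (d*d')*(a - d*x^2)*(B - D*x^2)" unfolding K_def by (simp add: algebra_simps)
    also have "d*d' = 1 + p^8*g'" using g' by simp
    finally show ?thesis by (simp add: algebra_simps)
  qed
  finally have q2': "Q2 D A B (-D*x^2) 1 0 x t4 = (p*p^8) * (-(d*h - g'*(a - d*x^2)*(B - D*x^2)))"
    by (simp only: mult_minus_left mult_minus_right mult.assoc)
  have p98: "p*p^8 = N" unfolding N_def using power_Suc[of p 8] by simp
  have q2: "N dvd Q2 D A B (-D*x^2) 1 0 x t4" unfolding q2' p98 by simp
  have Nq1: "N dvd Q1 D ((-D*x^2) mod N) (1 mod N) (0 mod N) (x mod N) (t4 mod N)"
    using cong_dvd_iff[OF Q1_mod[of D "-D*x^2" N 1 0 x t4]] q1 by simp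
  have Nq2: "N dvd Q2 D A B ((-D*x^2) mod N) (1 mod N) (0 mod N) (x mod N) (t4 mod N)"
    using Q2_mod[of D A B "-D*x^2" N 1 0 x t4] q2 by (simp add: cong_dvd_iff)
  have N0: "N > 0" using N1 by simp
  have m1: "1 mod N = 1" using N1 by simp
  have sol: "\<exists>t0\<in>{0..<N}. \<exists>t1\<in>{0..<N}. \<exists>t2\<in>{0..<N}. \<exists>t3\<in>{0..<N}. \<exists>t4\<in>{0..<N}.
           \<not> (p dvd t0 \<and> p dvd t1 \<and> p dvd t2 \<and> p dvd t3 \<and> p dvd t4) \<and>
           N dvd Q1 D t0 t1 t2 t3 t4 \<and> N dvd Q2 D A B t0 t1 t2 t3 t4"
  proof -
    have mem: "\<And>z. z mod N \<in> {0..<N}" using N0 by simp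
    have np: "\<not> (p dvd ((-D*x^2) mod N) \<and> p dvd (1 mod N) \<and> p dvd (0 mod N) \<and> p dvd (x mod N) \<and> p dvd (t4 mod N))"
      using m1 p2 by (auto simp: zdvd_not_zless)
    show ?thesis
      apply (rule bexI[OF _ mem[of "-D*x^2"]], rule bexI[OF _ mem[of 1]], rule bexI[OF _ mem[of 0]],
             rule bexI[OF _ mem[of x]], rule bexI[OF _ mem[of t4]])
      using np Nq1 Nq2 by blast
  qed
  have nB: "\<not> p dvd B"
  proof
    assume "p dvd B" from dvd_diff[OF B(3) this] have "p dvd 1" by simp
    thus False using p2 by (simp add: zdvd_not_zless)
  qed
  have nAB: "\<not> p dvd A - B"
  proof
    assume "p dvd A - B" from dvd_diff[OF dvd_add[OF B(3) this] A(3)] have "p dvd (B + 1) + (A - B) - A" .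
    hence "p dvd 1" by simp
    thus False using p2 by (simp add: zdvd_not_zless)
  qed
  have nG: "\<not> p dvd G A B"
  proof
    assume "p dvd G A B"
    moreover have "G A B = 4 + p*(p*a^2 - 2*a*(p*f0 - 1) + p*f0^2 - 4*f0 - 2*a)"
    proof -
      have B': "B = p*f0 - 1" using f0 by simp
      show ?thesis unfolding G_def a B' by (simp add: algebra_simps power2_eq_square)
    qed
    ultimately have "p dvd G A B - p*(p*a^2 - 2*a*(p*f0 - 1) + p*f0^2 - 4*f0 - 2*a)" by (intro dvd_diff) auto
    hence "p dvd 4" by (simp add: \<open>G A B = _\<close>)
    hence "p dvd 2*2" by simp
    hence "p dvd 2 \<or> p dvd 2" using p(1) prime_dvd_mult_iff by blast
    thus False using p_not2 by simp
  qed
  have d2: "\<And>z. \<not> p dvd z \<Longrightarrow> \<not> p^2 dvd z" using dvd_trans[of p "p^2"] by (auto simp: power2_eq_square)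
  show ?thesis unfolding R_def
    using sol A(1,2,4) B(1,2) d2[OF nB] d2[OF nAB] d2[OF nG] unfolding N_def by (simp add: Let_def power2_eq_square)
qed



lemma R_swap: assumes "(A,B) \<in> R D p l" shows "(B,A) \<in> R D p l"
proof -
  have q: "\<And>t0 t1 t2 t3 t4. Q2 D B A t0 t1 t2 t3 t4 = Q2 D A B t0 t1 t2 t3 t4"
    unfolding Q2_def by (simp add: mult.commute)
  have g: "G B A = G A B" unfolding G_def by (simp add: algebra_simps)
  have d: "\<And>m. (m dvd B - A) = (m dvd A - B)" by (metis dvd_minus_iff minus_diff_eq)
  show ?thesis using assms unfolding R_def by (auto simp: Let_def q g d split: if_splits)
qed

lemma card_R1:
  fixes p D :: int
  assumes p: "prime p" "odd p" and pD: "p dvd D" "\<not> p^2 dvd D"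
  shows "real (card (R D p 1)) \<ge> (real_of_int p)^16"
proof -
  have p2: "p \<ge> 2" using prime_ge_2_int[OF p(1)] .
  define I where "I = {0..<p^7} \<times> {1..<p} \<times> {0..<p^8}"
  define F where "F = (\<lambda>(j,r,k). (p*(p*j + r), p*k + (p - 1)))"
  define F' where "F' = (\<lambda>(j,r,k). (p*k + (p - 1), p*(p*j + r)))"
  have memF: "F x \<in> R D p 1" and memF': "F' x \<in> R D p 1" if "x \<in> I" for x
  proof -
    obtain j r k where x: "x = (j,r,k)" by (cases x) auto
    have j: "0 \<le> j" "j < p^7" and r: "1 \<le> r" "r < p" and k: "0 \<le> k" "k < p^8"
      using that unfolding I_def x by auto
    have jp: "j \<le> p^7 - 1" using j by simp
    have "p*j \<le> p*(p^7 - 1)" using jp p2 by (intro mult_left_mono) auto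
    hence A1: "p*j + r < p^8" using r by (simp add: algebra_simps power_Suc[of p 7, simplified])
    have A0: "0 \<le> p*j + r" using j r p2 by simp
    have Alt: "p*(p*j + r) < p^9"
    proof -
      have "p*(p*j+r) < p*p^8" using A1 p2 by simp
      thus ?thesis using power_Suc[of p 8] by simp
    qed
    have kp: "k \<le> p^8 - 1" using k by simp
    have "p*k \<le> p*(p^8 - 1)" using kp p2 by (intro mult_left_mono) auto
    hence Blt: "p*k + (p - 1) < p^9" using power_Suc[of p 8] by (simp add: algebra_simps)
    have nA: "\<not> p^2 dvd p*(p*j + r)"
    proof
      assume "p^2 dvd p*(p*j + r)"
      hence "p*p dvd p*(p*j+r)" by (simp add: power2_eq_square)
      hence "p dvd p*j + r" using p2 by simp
      hence "p dvd r" by (simp add: dvd_add_right_iff)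
      thus False using r zdvd_not_zless by auto
    qed
    have Bd: "p dvd (p*k + (p - 1)) + 1" by simp
    have "(p*(p*j + r), p*k + (p - 1)) \<in> R D p 1"
      by (rule in_R1[OF p pD]) (use A0 Alt nA k p2 Blt in auto)
    thus "F x \<in> R D p 1" "F' x \<in> R D p 1" unfolding F_def F'_def x using R_swap by auto
  qed
  have injF: "inj_on F I"
  proof
    fix x y assume xy: "x \<in> I" "y \<in> I" "F x = F y"
    obtain j r k where x: "x = (j,r,k)" by (cases x) auto
    obtain j' r' k' where y: "y = (j',r',k')" by (cases y) auto
    have r: "0 \<le> r" "r < p" "0 \<le> r'" "r' < p" using xy(1,2) unfolding I_def x y by auto
    from xy(3) have e1: "p*(p*j + r) = p*(p*j'+r')" and e2: "p*k + (p-1) = p*k' + (p-1)"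
      unfolding F_def x y by auto
    from e1 p2 have e1': "p*j + r = p*j' + r'" by simp
    have "(p*j + r) mod p = r" "(p*j' + r') mod p = r'" using r by auto
    hence rr: "r = r'" using e1' by simp
    hence "j = j'" using e1' p2 by simp
    moreover have "k = k'" using e2 p2 by simp
    ultimately show "x = y" using rr x y by simp
  qed
  have injF': "inj_on F' I"
  proof
    fix x y assume xy: "x \<in> I" "y \<in> I" "F' x = F' y"
    hence "F x = F y" unfolding F_def F'_def by (auto split: prod.splits)
    thus "x = y" using injF xy(1,2) by (simp add: inj_on_def)
  qed
  have disj: "F ` I \<inter> F' ` I = {}"
  proof (rule ccontr)
    assume "F ` I \<inter> F' ` I \<noteq> {}"
    then obtain x y where "x \<in> I" "y \<in> I" "F x = F' y" by blast
    then obtain j r k j' r' k' where "p*(p*j + r) = p*k' + (p - 1)"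
      unfolding F_def F'_def by (auto split: prod.splits)
    hence "p dvd p*k' + (p - 1)" by (metis dvd_triv_left)
    hence "p dvd (p*k' + (p - 1)) - p*(k'+1)" by (intro dvd_diff) auto
    hence "p dvd -1" by (simp add: algebra_simps)
    thus False using p2 by simp
  qed
  have fin: "finite I" unfolding I_def by auto
  have cI: "card I = nat (p^7) * (nat (p - 1) * nat (p^8))" unfolding I_def
    by (simp add: card_cartesian_product)
  have sub: "F ` I \<union> F' ` I \<subseteq> R D p 1" using memF memF' by auto
  have finR: "finite (R D p 1)"
  proof -
    have "R D p 1 \<subseteq> {0..<p^9} \<times> {0..<p^9}" unfolding R_def by (auto simp: Let_def)
    thus ?thesis by (rule finite_subset) auto
  qed
  have "card (F ` I \<union> F' ` I) = 2 * card I"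
    using fin disj injF injF' by (simp add: card_Un_disjoint card_image)
  hence "2 * card I \<le> card (R D p 1)" using card_mono[OF finR sub] by simp
  hence "real (2 * card I) \<le> real (card (R D p 1))" by linarith
  moreover have "real (2 * card I) = 2 * (real_of_int p)^7 * (real_of_int p - 1) * (real_of_int p)^8"
    unfolding cI using p2 by (simp add: of_nat_nat)
  moreover have "(real_of_int p)^16 \<le> 2 * (real_of_int p)^7 * (real_of_int p - 1) * (real_of_int p)^8"
  proof -
    have pr: "real_of_int p \<ge> 2" using p2 by simp
    have "(real_of_int p)^16 = (real_of_int p)^15 * real_of_int p" using power_add[of "real_of_int p" 15 1] by simp
    also have "\<dots> \<le> (real_of_int p)^15 * (2*(real_of_int p - 1))" using pr by (intro mult_left_mono) auto
    also have "\<dots> = 2 * (real_of_int p)^7 * (real_of_int p - 1) * (real_of_int p)^8"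
      by (simp add: algebra_simps flip: power_add)
    finally show ?thesis .
  qed
  ultimately show ?thesis by linarith
qed



lemma prod_mono_ennreal:
  fixes f g :: "'a \<Rightarrow> ennreal"
  shows "(\<And>i. i \<in> A \<Longrightarrow> f i \<le> g i) \<Longrightarrow> prod f A \<le> prod g A"
  by (induct A rule: infinite_finite_induct) (auto intro!: mult_mono)

theorem lemma2p5:
  fixes D :: int
  assumes "squarefree D"
    and "\<not> (\<exists>k::int. D = k^2)"
    and "D mod 8 = 1"
  shows "c_loc D \<ge> ennreal (4 / real_of_int (D^2))"
proof -
  define P where "P = {p::nat. prime p \<and> int p dvd D}"
  define S where "S p = (\<Sum>l. ennreal (real (card (Rstar D (int p) (Suc l))) / real p ^ (2*(8*(Suc l)+1))))" for p :: nat
  have cl: "c_loc D = 4 * prod S P" unfolding c_loc_def S_def P_def by simp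
  have D0: "D \<noteq> 0" using assms(3) by auto
  have Dodd: "odd D" using assms(3) by presburger
  have lb: "S p \<ge> ennreal (1 / real p ^ 2)" if pP: "p \<in> P" for p
  proof -
    have pp: "prime p" "int p dvd D" using pP unfolding P_def by auto
    have pi: "prime (int p)" using pp(1) by simp
    have po: "odd (int p)" using pp(2) Dodd by (metis dvd_trans)
    have pn: "\<not> (int p)^2 dvd D"
    proof
      assume "(int p)^2 dvd D"
      hence "is_unit (int p)" using assms(1) unfolding squarefree_def by blast
      thus False using pi by simp
    qed
    have c: "real (card (R D (int p) 1)) \<ge> (real_of_int (int p))^16"
      by (rule card_R1[OF pi po pp(2) pn])
    have rs: "Rstar D (int p) (Suc 0) = R D (int p) 1"
      unfolding Rstar_def by (auto simp: R_def[of D "int p" 0])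
    have p1: "real p \<ge> 2" using prime_ge_2_nat[OF pp(1)] by simp
    define f where "f l = ennreal (real (card (Rstar D (int p) (Suc l))) / real p ^ (2*(8*(Suc l)+1)))" for l
    have "f 0 \<le> S p" unfolding S_def f_def[symmetric] 
    proof (rule ccontr)
      assume "\<not> f 0 \<le> (\<Sum>l. f l)"
      hence "(\<Sum>l. f l) < f 0" by simp
      from ennreal_suminf_lessD[OF this, of 0] show False by simp
    qed
    moreover have "ennreal (1 / real p ^ 2) \<le> f 0"
      unfolding f_def
    proof (rule ennreal_leI)
      have "1 / real p ^ 2 = real p ^ 16 / real p ^ 18" using p1 by (simp add: field_simps flip: power_add)
      also have "\<dots> \<le> real (card (R D (int p) 1)) / real p ^ 18"
        using c p1 by (intro divide_right_mono) auto
      finally show "1 / real p ^ 2 \<le> real (card (Rstar D (int p) (Suc 0))) / real p ^ (2 * (8 * Suc 0 + 1))"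
        using rs by simp
    qed
    ultimately show ?thesis by simp
  qed
  have finP: "finite P"
  proof -
    have "P \<subseteq> {..nat \<bar>D\<bar>}" unfolding P_def using D0
      by (auto dest!: zdvd_imp_le[of _ "\<bar>D\<bar>", simplified] simp: dvd_abs_iff)
    thus ?thesis by (rule finite_subset) auto
  qed
  have "prod S P \<ge> prod (\<lambda>p. ennreal (1 / real p ^ 2)) P" using lb by (intro prod_mono_ennreal)
  also have "prod (\<lambda>p. ennreal (1 / real p ^ 2)) P = ennreal (prod (\<lambda>p. 1 / real p ^ 2) P)"
    by (rule prod_ennreal) simp
  also have "prod (\<lambda>p. 1 / real p ^ 2) P = 1 / (real (prod id P))^2"
    by (simp add: prod_dividef power_divide prod_power_distrib[symmetric] flip: of_nat_prod)
  finally have pS: "prod S P \<ge> ennreal (1 / (real (prod id P))^2)" .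
  have "prod id P dvd nat \<bar>D\<bar>"
  proof -
    have n0: "nat \<bar>D\<bar> \<noteq> 0" using D0 by simp
    have PP: "P = prime_factors (nat \<bar>D\<bar>)"
      unfolding P_def using n0 by (auto simp: prime_factors_dvd)
    have "prod id P dvd (\<Prod>p \<in> P. p ^ multiplicity p (nat \<bar>D\<bar>))"
      unfolding PP by (rule prod_dvd_prod) (simp add: prime_factors_multiplicity dvd_power)
    also have "\<dots> = nat \<bar>D\<bar>" unfolding PP using prod_prime_factors[OF n0] by simp
    finally show ?thesis .
  qed
  hence le: "prod id P \<le> nat \<bar>D\<bar>" using D0 by (intro dvd_imp_le) auto
  have pos: "prod id P > 0" unfolding P_def
    by (rule prod_pos) (auto simp: prime_gt_0_nat)
  have "real (prod id P) \<le> \<bar>real_of_int D\<bar>" using le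
    by (metis of_int_abs of_nat_le_iff of_nat_nat abs_ge_zero of_int_of_nat_eq)
  hence "(real (prod id P))^2 \<le> (real_of_int D)^2"
    by (metis abs_ge_zero of_nat_0_le_iff power2_abs power_mono)
  moreover have "(real (prod id P))^2 > 0" using pos by (simp del: of_nat_prod)
  moreover have "(real_of_int D)^2 > 0" using D0 by simp
  ultimately have "1 / (real_of_int D)^2 \<le> 1 / (real (prod id P))^2"
    by (intro divide_left_mono) (auto simp del: of_nat_prod)
  hence "ennreal (1 / real_of_int (D^2)) \<le> prod S P" using pS
    by (metis (no_types, lifting) ennreal_leI of_int_power order_trans)
  hence "4 * ennreal (1 / real_of_int (D^2)) \<le> 4 * prod S P" by (intro mult_left_mono) auto
  moreover have "4 * ennreal (1 / real_of_int (D^2)) = ennreal (4 / real_of_int (D^2))"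
    using ennreal_mult[of 4 "1/(real_of_int D)^2"] by simp
  ultimately show ?thesis unfolding cl by simp
qed


end
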